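(* Let $\mathbf{C}$ be a category with a stable system of monics $\mathcal{M}$ that has pushouts along $\mathcal{M}$-morphisms and such that $\mathcal{M}$-morphisms are stable under pushout. Then the source functor $S:\mathsf{PO}_v(\mathbf{C},\mathcal{M})\to\mathbf{C}|_{\mathcal{M}}$ is a Grothendieck opfibration, with op-Cartesian liftings provided by pushouts: for an object $f:A\to B$ and an $\mathcal{M}$-morphism $\alpha:A\rightarrowtail A'$, the pushout $A'\xrightarrow{f'}B'\xleftarrow{\beta}B$ of $(\alpha,f)$ yields an op-Cartesian morphism $(\alpha,\beta):f\to f'$.
   Context: A stable system of monics $\mathcal{M}$ in $\mathbf{C}$ is a class of monomorphisms containing all isomorphisms, closed under composition, and stable under pullback; $\rightarrowtail$ denotes morphisms in $\mathcal{M}$. "Has pushouts along $\mathcal{M}$-morphisms": pushouts of spans $A'\leftarrowtail A\to B$ exist. "$\mathcal{M}$-morphisms are stable under pushout": in any pushout $A'\to B'\xleftarrow{\beta}B$ of a span $A'\xleftarrow{\alpha}A\to B$ with $\alpha\in\mathcal{M}$, one has $\beta\in\mathcal{M}$. $\mathbf{C}|_{\mathcal{M}}$ has the objects of $\mathbf{C}$ and the $\mathcal{M}$-morphisms as morphisms. The category $\mathsf{PO}_v(\mathbf{C},\mathcal{M})$: objects are morphisms $f:A\to B$ of $\mathbf{C}$; a morphism from $f:A\to B$ to $f':A'\to B'$ is a pair $(\alpha,\beta)$ of $\mathcal{M}$-morphisms $\alpha:A\rightarrowtail A'$, $\beta:B\rightarrowtail B'$ with $\beta\circ f=f'\circ\alpha$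 such that this square is a pushout of $(\alpha,f)$; composition is componentwise. $S$ sends $f:A\to B$ to $A$ and $(\alpha,\beta)$ to $\alpha$. For a functor $P:\mathbf{E}\to\mathbf{B}$, a morphism $\varphi:e\to e'$ is op-Cartesian if for every $\psi:e\to e''$ and $g:P(e')\to P(e'')$ with $g\circ P(\varphi)=P(\psi)$ there is a unique $\chi:e'\to e''$ with $\chi\circ\varphi=\psi$ and $P(\chi)=g$; $P$ is a Grothendieck opfibration if every $f:b\to b'$ has an op-Cartesian lifting at every $e$ with $P(e)=b$. *)

theory Defs
  imports Main
begin

text \<open>A category is given by a set of objects, a set of arrows, domain/codomain maps,
identities and composition; comp C g f is "g after f".\<close>

record ('o, 'a) category =
  Obj :: "'o set"
  Arr :: "'a set"
  cdom :: "'a \<Rightarrow> 'o"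
  ccod :: "'a \<Rightarrow> 'o"
  ident :: "'o \<Rightarrow> 'a"
  comp :: "'a \<Rightarrow> 'a \<Rightarrow> 'a"

definition hom :: "('o, 'a, 'x) category_scheme \<Rightarrow> 'o \<Rightarrow> 'o \<Rightarrow> 'a set" where
  "hom C a b = {f \<in> Arr C. cdom C f = a \<and> ccod C f = b}"

definition is_category :: "('o, 'a, 'x) category_scheme \<Rightarrow> bool" where
  "is_category C \<longleftrightarrow>
     (\<forall>f \<in> Arr C. cdom C f \<in> Obj C \<and> ccod C f \<in> Obj C) \<and>
     (\<forall>a \<in> Obj C. ident C a \<in> hom C a a) \<and>
     (\<forall>f \<in> Arr C. comp C f (ident C (cdom C f)) = f \<and> comp C (ident C (ccod C f)) f = f) \<and>
     (\<forall>f \<in> Arr C. \<forall>g \<in> Arr C. ccod C f = cdom C g \<longrightarrow>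
         comp C g f \<in> hom C (cdom C f) (ccod C g)) \<and>
     (\<forall>f \<in> Arr C. \<forall>g \<in> Arr C. \<forall>h \<in> Arr C. ccod C f = cdom C g \<longrightarrow> ccod C g = cdom C h \<longrightarrow>
         comp C h (comp C g f) = comp C (comp C h g) f)"

definition is_mono :: "('o, 'a, 'x) category_scheme \<Rightarrow> 'a \<Rightarrow> bool" where
  "is_mono C m \<longleftrightarrow> m \<in> Arr C \<and>
     (\<forall>g \<in> Arr C. \<forall>h \<in> Arr C. ccod C g = cdom C m \<longrightarrow> ccod C h = cdom C m \<longrightarrow>
        cdom C g = cdom C h \<longrightarrow> comp C m g = comp C m h \<longrightarrow> g = h)"

definition is_iso :: "('o, 'a, 'x) category_scheme \<Rightarrow> 'a \<Rightarrow> bool" where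
  "is_iso C f \<longleftrightarrow> f \<in> Arr C \<and>
     (\<exists>g \<in> hom C (ccod C f) (cdom C f).
        comp C g f = ident C (cdom C f) \<and> comp C f g = ident C (ccod C f))"

text \<open>is_pullback C m g p q: the square with p : P \<rightarrow> Y, q : P \<rightarrow> X, m : X \<rightarrow> Z,
  g : Y \<rightarrow> Z, m \<circ> q = g \<circ> p, is a pullback (p is the pullback of m along g).\<close>

definition is_pullback :: "('o, 'a, 'x) category_scheme \<Rightarrow> 'a \<Rightarrow> 'a \<Rightarrow> 'a \<Rightarrow> 'a \<Rightarrow> bool" where
  "is_pullback C m g p q \<longleftrightarrow>
     m \<in> Arr C \<and> g \<in> Arr C \<and> p \<in> Arr C \<and> q \<in> Arr C \<and>
     ccod C m = ccod C g \<and> ccod C p = cdom C g \<and> ccod C q = cdom C m \<and>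
     cdom C p = cdom C q \<and> comp C m q = comp C g p \<and>
     (\<forall>u \<in> Arr C. \<forall>v \<in> Arr C. ccod C u = cdom C g \<longrightarrow> ccod C v = cdom C m \<longrightarrow>
        cdom C u = cdom C v \<longrightarrow> comp C m v = comp C g u \<longrightarrow>
        (\<exists>!w. w \<in> hom C (cdom C u) (cdom C p) \<and> comp C p w = u \<and> comp C q w = v))"

text \<open>is_pushout C \<alpha> f f' \<beta>: for the span A' \<leftarrow> A \<rightarrow> B given by \<alpha> : A \<rightarrow> A' and
  f : A \<rightarrow> B, the cospan A' \<rightarrow> B' \<leftarrow> B given by f' and \<beta> is a pushout.\<close>

definition is_pushout :: "('o, 'a, 'x) category_scheme \<Rightarrow> 'a \<Rightarrow> 'a \<Rightarrow> 'a \<Rightarrow> 'a \<Rightarrow> bool" where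
  "is_pushout C \<alpha> f f' \<beta> \<longleftrightarrow>
     \<alpha> \<in> Arr C \<and> f \<in> Arr C \<and> f' \<in> Arr C \<and> \<beta> \<in> Arr C \<and>
     cdom C \<alpha> = cdom C f \<and> cdom C f' = ccod C \<alpha> \<and> cdom C \<beta> = ccod C f \<and>
     ccod C f' = ccod C \<beta> \<and> comp C f' \<alpha> = comp C \<beta> f \<and>
     (\<forall>g \<in> Arr C. \<forall>h \<in> Arr C. cdom C g = ccod C \<alpha> \<longrightarrow> cdom C h = ccod C f \<longrightarrow>
        ccod C g = ccod C h \<longrightarrow> comp C g \<alpha> = comp C h f \<longrightarrow>
        (\<exists>!u. u \<in> hom C (ccod C f') (ccod C g) \<and> comp C u f' = g \<and> comp C u \<beta> = h))"

definition stable_system :: "('o, 'a, 'x) category_scheme \<Rightarrow> 'a set \<Rightarrow> bool" where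
  "stable_system C M \<longleftrightarrow>
     (\<forall>m \<in> M. is_mono C m) \<and>
     (\<forall>f. is_iso C f \<longrightarrow> f \<in> M) \<and>
     (\<forall>m \<in> M. \<forall>n \<in> M. ccod C m = cdom C n \<longrightarrow> comp C n m \<in> M) \<and>
     (\<forall>m \<in> M. \<forall>g \<in> Arr C. ccod C g = ccod C m \<longrightarrow>
        (\<exists>p q. is_pullback C m g p q \<and> p \<in> M))"

definition has_pushouts_along :: "('o, 'a, 'x) category_scheme \<Rightarrow> 'a set \<Rightarrow> bool" where
  "has_pushouts_along C M \<longleftrightarrow>
     (\<forall>\<alpha> \<in> M. \<forall>f \<in> Arr C. cdom C f = cdom C \<alpha> \<longrightarrow> (\<exists>f' \<beta>. is_pushout C \<alpha> f f' \<beta>))"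

definition pushout_stable :: "('o, 'a, 'x) category_scheme \<Rightarrow> 'a set \<Rightarrow> bool" where
  "pushout_stable C M \<longleftrightarrow>
     (\<forall>\<alpha> f f' \<beta>. \<alpha> \<in> M \<longrightarrow> is_pushout C \<alpha> f f' \<beta> \<longrightarrow> \<beta> \<in> M)"

definition restr :: "('o, 'a) category \<Rightarrow> 'a set \<Rightarrow> ('o, 'a) category" where
  "restr C M = C\<lparr>Arr := M\<rparr>"

text \<open>PO_v(C,M). A morphism (\<alpha>,\<beta>) : f \<rightarrow> f' is encoded as the quadruple (f, \<alpha>, \<beta>, f').\<close>

definition POv :: "('o, 'a) category \<Rightarrow> 'a set \<Rightarrow> ('a, 'a \<times> 'a \<times> 'a \<times> 'a) category" where
  "POv C M = \<lparr>
     Obj = Arr C,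
     Arr = {(f, \<alpha>, \<beta>, f'). f \<in> Arr C \<and> f' \<in> Arr C \<and> \<alpha> \<in> M \<and> \<beta> \<in> M \<and>
              cdom C \<alpha> = cdom C f \<and> ccod C \<alpha> = cdom C f' \<and>
              cdom C \<beta> = ccod C f \<and> ccod C \<beta> = ccod C f' \<and>
              comp C \<beta> f = comp C f' \<alpha> \<and> is_pushout C \<alpha> f f' \<beta>},
     cdom = (\<lambda>(f, \<alpha>, \<beta>, f'). f),
     ccod = (\<lambda>(f, \<alpha>, \<beta>, f'). f'),
     ident = (\<lambda>f. (f, ident C (cdom C f), ident C (ccod C f), f)),
     comp = (\<lambda>(g, \<alpha>', \<beta>', g') (f, \<alpha>, \<beta>, f'). (f, comp C \<alpha>' \<alpha>, comp C \<beta>' \<beta>, g'))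
   \<rparr>"

definition S_obj :: "('o, 'a) category \<Rightarrow> 'a \<Rightarrow> 'o" where
  "S_obj C f = cdom C f"

definition S_arr :: "'a \<times> 'a \<times> 'a \<times> 'a \<Rightarrow> 'a" where
  "S_arr = (\<lambda>(f, \<alpha>, \<beta>, f'). \<alpha>)"

definition is_functor ::
  "('o1, 'a1, 'x) category_scheme \<Rightarrow> ('o2, 'a2, 'y) category_scheme \<Rightarrow>
   ('o1 \<Rightarrow> 'o2) \<Rightarrow> ('a1 \<Rightarrow> 'a2) \<Rightarrow> bool" where
  "is_functor E B Fo Fa \<longleftrightarrow>
     is_category E \<and> is_category B \<and>
     (\<forall>e \<in> Obj E. Fo e \<in> Obj B) \<and>
     (\<forall>\<phi> \<in> Arr E. Fa \<phi> \<in> hom B (Fo (cdom E \<phi>)) (Fo (ccod E \<phi>))) \<and>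
     (\<forall>e \<in> Obj E. Fa (ident E e) = ident B (Fo e)) \<and>
     (\<forall>\<phi> \<in> Arr E. \<forall>\<psi> \<in> Arr E. ccod E \<phi> = cdom E \<psi> \<longrightarrow>
        Fa (comp E \<psi> \<phi>) = comp B (Fa \<psi>) (Fa \<phi>))"

definition op_cartesian ::
  "('o1, 'a1, 'x) category_scheme \<Rightarrow> ('o2, 'a2, 'y) category_scheme \<Rightarrow>
   ('o1 \<Rightarrow> 'o2) \<Rightarrow> ('a1 \<Rightarrow> 'a2) \<Rightarrow> 'a1 \<Rightarrow> bool" where
  "op_cartesian E B Fo Fa \<phi> \<longleftrightarrow> \<phi> \<in> Arr E \<and>
     (\<forall>\<psi> \<in> Arr E. \<forall>g \<in> hom B (Fo (ccod E \<phi>)) (Fo (ccod E \<psi>)).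
        cdom E \<psi> = cdom E \<phi> \<longrightarrow> comp B g (Fa \<phi>) = Fa \<psi> \<longrightarrow>
        (\<exists>!\<chi>. \<chi> \<in> hom E (ccod E \<phi>) (ccod E \<psi>) \<and> comp E \<chi> \<phi> = \<psi> \<and> Fa \<chi> = g))"

definition grothendieck_opfibration ::
  "('o1, 'a1, 'x) category_scheme \<Rightarrow> ('o2, 'a2, 'y) category_scheme \<Rightarrow>
   ('o1 \<Rightarrow> 'o2) \<Rightarrow> ('a1 \<Rightarrow> 'a2) \<Rightarrow> bool" where
  "grothendieck_opfibration E B Fo Fa \<longleftrightarrow>
     is_functor E B Fo Fa \<and>
     (\<forall>e \<in> Obj E. \<forall>f \<in> Arr B. cdom B f = Fo e \<longrightarrow>
        (\<exists>\<phi>. \<phi> \<in> Arr E \<and> cdom E \<phi> = e \<and> Fa \<phi> = f \<and> op_cartesian E B Fo Fa \<phi>))"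

end

theory Submission
  imports Defs
begin

locale cat =
  fixes C :: "('o, 'a, 'x) category_scheme"
  assumes cat: "is_category C"
begin

lemma dc_obj: "f \<in> Arr C \<Longrightarrow> cdom C f \<in> Obj C \<and> ccod C f \<in> Obj C"
  using cat unfolding is_category_def by blast

lemma id_hom: "a \<in> Obj C \<Longrightarrow> ident C a \<in> Arr C \<and> cdom C (ident C a) = a \<and> ccod C (ident C a) = a"
  using cat unfolding is_category_def hom_def by blast

lemma id_r[simp]: "f \<in> Arr C \<Longrightarrow> comp C f (ident C (cdom C f)) = f"
  using cat unfolding is_category_def by blast

lemma id_l[simp]: "f \<in> Arr C \<Longrightarrow> comp C (ident C (ccod C f)) f = f"
  using cat unfolding is_category_def by blast

lemma comp_arr: "f \<in> Arr C \<Longrightarrow> g \<in> Arr C \<Longrightarrow> ccod C f = cdom C g \<Longrightarrow>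
   comp C g f \<in> Arr C \<and> cdom C (comp C g f) = cdom C f \<and> ccod C (comp C g f) = ccod C g"
  using cat unfolding is_category_def hom_def by blast

lemma assoc: "f \<in> Arr C \<Longrightarrow> g \<in> Arr C \<Longrightarrow> h \<in> Arr C \<Longrightarrow> ccod C f = cdom C g \<Longrightarrow> ccod C g = cdom C h \<Longrightarrow>
   comp C h (comp C g f) = comp C (comp C h g) f"
  using cat unfolding is_category_def by blast

lemma pushout_compose:
  assumes P1: "is_pushout C \<alpha> f f' \<beta>" and P2: "is_pushout C g f' f'' u"
  shows "is_pushout C (comp C g \<alpha>) f f'' (comp C u \<beta>)"
proof -
  have a: "\<alpha> \<in> Arr C" "f \<in> Arr C" "f' \<in> Arr C" "\<beta> \<in> Arr C"
     "cdom C \<alpha> = cdom C f" "cdom C f' = ccod C \<alpha>" "cdom C \<beta> = ccod C f"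
     "ccod C f' = ccod C \<beta>" "comp C f' \<alpha> = comp C \<beta> f"
    using P1 unfolding is_pushout_def by auto
  have b: "g \<in> Arr C" "f'' \<in> Arr C" "u \<in> Arr C"
     "cdom C g = cdom C f'" "cdom C f'' = ccod C g" "cdom C u = ccod C f'"
     "ccod C f'' = ccod C u" "comp C f'' g = comp C u f'"
    using P2 unfolding is_pushout_def by auto
  have U1: "\<And>x y. x \<in> Arr C \<Longrightarrow> y \<in> Arr C \<Longrightarrow> cdom C x = ccod C \<alpha> \<Longrightarrow> cdom C y = ccod C f \<Longrightarrow>
        ccod C x = ccod C y \<Longrightarrow> comp C x \<alpha> = comp C y f \<Longrightarrow>
        (\<exists>!k. k \<in> hom C (ccod C f') (ccod C x) \<and> comp C k f' = x \<and> comp C k \<beta> = y)"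
    using P1 unfolding is_pushout_def by blast
  have U2: "\<And>x y. x \<in> Arr C \<Longrightarrow> y \<in> Arr C \<Longrightarrow> cdom C x = ccod C g \<Longrightarrow> cdom C y = ccod C f' \<Longrightarrow>
        ccod C x = ccod C y \<Longrightarrow> comp C x g = comp C y f' \<Longrightarrow>
        (\<exists>!k. k \<in> hom C (ccod C f'') (ccod C x) \<and> comp C k f'' = x \<and> comp C k u = y)"
    using P2 unfolding is_pushout_def by blast
  have ga: "comp C g \<alpha> \<in> Arr C" "cdom C (comp C g \<alpha>) = cdom C \<alpha>" "ccod C (comp C g \<alpha>) = ccod C g"
    using comp_arr a b by auto
  have ub: "comp C u \<beta> \<in> Arr C" "cdom C (comp C u \<beta>) = cdom C \<beta>" "ccod C (comp C u \<beta>) = ccod C u"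
    using comp_arr a b by auto
  have sq: "comp C f'' (comp C g \<alpha>) = comp C (comp C u \<beta>) f"
  proof -
    have "comp C f'' (comp C g \<alpha>) = comp C (comp C f'' g) \<alpha>" using assoc[of \<alpha> g f''] a b by auto
    also have "\<dots> = comp C (comp C u f') \<alpha>" using b by simp
    also have "\<dots> = comp C u (comp C f' \<alpha>)" using assoc[of \<alpha> f' u] a b by auto
    also have "\<dots> = comp C u (comp C \<beta> f)" using a by simp
    also have "\<dots> = comp C (comp C u \<beta>) f" using assoc[of f \<beta> u] a b by auto
    finally show ?thesis .
  qed
  have univ: "\<exists>!m. m \<in> hom C (ccod C f'') (ccod C x) \<and> comp C m f'' = x \<and> comp C m (comp C u \<beta>) = y"
    if x: "x \<in> Arr C" and y: "y \<in> Arr C" and dx: "cdom C x = ccod C (comp C g \<alpha>)"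
      and dy: "cdom C y = ccod C f" and cxy: "ccod C x = ccod C y"
      and e: "comp C x (comp C g \<alpha>) = comp C y f" for x y
  proof -
    have xg: "comp C x g \<in> Arr C" "cdom C (comp C x g) = ccod C \<alpha>" "ccod C (comp C x g) = ccod C x"
      using comp_arr[of g x] x b a dx ga by auto
    have e1: "comp C (comp C x g) \<alpha> = comp C y f" using e assoc a b x dx ga by auto
    obtain k where k: "k \<in> hom C (ccod C f') (ccod C (comp C x g))" "comp C k f' = comp C x g" "comp C k \<beta> = y"
      using U1[OF xg(1) y xg(2) dy] xg cxy e1 by metis
    have kA: "k \<in> Arr C" "cdom C k = ccod C f'" "ccod C k = ccod C x" using k(1) xg unfolding hom_def by auto
    obtain m where m: "m \<in> hom C (ccod C f'') (ccod C x)" "comp C m f'' = x" "comp C m u = k"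
      and muni: "\<And>m'. m' \<in> hom C (ccod C f'') (ccod C x) \<Longrightarrow> comp C m' f'' = x \<Longrightarrow> comp C m' u = k \<Longrightarrow> m' = m"
      using U2[OF x kA(1)] dx ga kA k(2) by metis
    have mA: "m \<in> Arr C" "cdom C m = ccod C u" using m(1) b unfolding hom_def by auto
    show ?thesis
    proof (rule ex1I[of _ m])
      show "m \<in> hom C (ccod C f'') (ccod C x) \<and> comp C m f'' = x \<and> comp C m (comp C u \<beta>) = y"
        using m k assoc[of \<beta> u m] a b mA by auto
    next
      fix m' assume H: "m' \<in> hom C (ccod C f'') (ccod C x) \<and> comp C m' f'' = x \<and> comp C m' (comp C u \<beta>) = y"
      have m'A: "m' \<in> Arr C" "cdom C m' = ccod C u" "ccod C m' = ccod C x" using H b unfolding hom_def by auto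
      have muA: "comp C m' u \<in> Arr C" "cdom C (comp C m' u) = ccod C f'" "ccod C (comp C m' u) = ccod C x"
        using comp_arr[of u m'] m'A b by auto
      have "comp C (comp C m' u) f' = comp C x g"
        using assoc[of f' u m'] assoc[of g f'' m'] a b m'A H by auto
      moreover have "comp C (comp C m' u) \<beta> = y" using assoc[of \<beta> u m'] a b m'A H by auto
      ultimately have "comp C m' u = k"
        using U1[OF xg(1) y xg(2) dy] xg cxy e1 k muA unfolding hom_def by auto
      then show "m' = m" using muni H by blast
    qed
  qed
  show ?thesis unfolding is_pushout_def
    using a b ga ub sq univ by auto
qed

lemma pushout_cancel:
  assumes P1: "is_pushout C \<alpha> f f' \<beta>" and PO: "is_pushout C (comp C g \<alpha>) f f'' (comp C u \<beta>)"
    and b: "g \<in> Arr C" "f'' \<in> Arr C" "u \<in> Arr C"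
     "cdom C g = cdom C f'" "cdom C f'' = ccod C g" "cdom C u = ccod C f'"
     "ccod C f'' = ccod C u" "comp C f'' g = comp C u f'"
  shows "is_pushout C g f' f'' u"
proof -
  have a: "\<alpha> \<in> Arr C" "f \<in> Arr C" "f' \<in> Arr C" "\<beta> \<in> Arr C"
     "cdom C \<alpha> = cdom C f" "cdom C f' = ccod C \<alpha>" "cdom C \<beta> = ccod C f"
     "ccod C f' = ccod C \<beta>" "comp C f' \<alpha> = comp C \<beta> f"
    using P1 unfolding is_pushout_def by auto
  have U1: "\<And>x y. x \<in> Arr C \<Longrightarrow> y \<in> Arr C \<Longrightarrow> cdom C x = ccod C \<alpha> \<Longrightarrow> cdom C y = ccod C f \<Longrightarrow>
        ccod C x = ccod C y \<Longrightarrow> comp C x \<alpha> = comp C y f \<Longrightarrow>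
        (\<exists>!k. k \<in> hom C (ccod C f') (ccod C x) \<and> comp C k f' = x \<and> comp C k \<beta> = y)"
    using P1 unfolding is_pushout_def by blast
  have ga: "comp C g \<alpha> \<in> Arr C" "cdom C (comp C g \<alpha>) = cdom C \<alpha>" "ccod C (comp C g \<alpha>) = ccod C g"
    using comp_arr a b by auto
  have ub: "comp C u \<beta> \<in> Arr C" "cdom C (comp C u \<beta>) = cdom C \<beta>" "ccod C (comp C u \<beta>) = ccod C u"
    using comp_arr a b by auto
  have UO: "\<And>x y. x \<in> Arr C \<Longrightarrow> y \<in> Arr C \<Longrightarrow> cdom C x = ccod C g \<Longrightarrow> cdom C y = ccod C f \<Longrightarrow>
        ccod C x = ccod C y \<Longrightarrow> comp C x (comp C g \<alpha>) = comp C y f \<Longrightarrow>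
        (\<exists>!k. k \<in> hom C (ccod C f'') (ccod C x) \<and> comp C k f'' = x \<and> comp C k (comp C u \<beta>) = y)"
    using PO ga unfolding is_pushout_def by metis
  have univ: "\<exists>!m. m \<in> hom C (ccod C f'') (ccod C x) \<and> comp C m f'' = x \<and> comp C m u = k"
    if x: "x \<in> Arr C" and k: "k \<in> Arr C" and dx: "cdom C x = ccod C g"
      and dk: "cdom C k = ccod C f'" and cxk: "ccod C x = ccod C k"
      and e: "comp C x g = comp C k f'" for x k
  proof -
    have kb: "comp C k \<beta> \<in> Arr C" "cdom C (comp C k \<beta>) = ccod C f" "ccod C (comp C k \<beta>) = ccod C k"
      using comp_arr[of \<beta> k] k a dk by auto
    have xg: "comp C x g \<in> Arr C" "cdom C (comp C x g) = ccod C \<alpha>" "ccod C (comp C x g) = ccod C x"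
      using comp_arr[of g x] x b a dx by auto
    have e1: "comp C x (comp C g \<alpha>) = comp C (comp C k \<beta>) f"
    proof -
      have "comp C x (comp C g \<alpha>) = comp C (comp C x g) \<alpha>" using assoc[of \<alpha> g x] a b x dx by auto
      also have "\<dots> = comp C (comp C k f') \<alpha>" using e by simp
      also have "\<dots> = comp C k (comp C f' \<alpha>)" using assoc[of \<alpha> f' k] a k dk by auto
      also have "\<dots> = comp C k (comp C \<beta> f)" using a by simp
      also have "\<dots> = comp C (comp C k \<beta>) f" using assoc[of f \<beta> k] a k dk by auto
      finally show ?thesis .
    qed
    obtain m where m: "m \<in> hom C (ccod C f'') (ccod C x)" "comp C m f'' = x" "comp C m (comp C u \<beta>) = comp C k \<beta>"
      and muni: "\<And>m'. m' \<in> hom C (ccod C f'') (ccod C x) \<Longrightarrow> comp C m' f'' = x \<Longrightarrow> comp C m' (comp C u \<beta>) = comp C k \<beta> \<Longrightarrow> m' = m"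
      using UO[OF x kb(1) dx kb(2)] kb cxk e1 by metis
    have mA: "m \<in> Arr C" "cdom C m = ccod C u" "ccod C m = ccod C x" using m(1) b unfolding hom_def by auto
    have muA: "comp C m u \<in> Arr C" "cdom C (comp C m u) = ccod C f'" "ccod C (comp C m u) = ccod C x"
      using comp_arr[of u m] mA b by auto
    have e2: "comp C (comp C x g) \<alpha> = comp C (comp C k \<beta>) f"
      using e1 assoc[of \<alpha> g x] a b x dx by auto
    have "comp C (comp C m u) f' = comp C x g"
      using assoc[of f' u m] assoc[of g f'' m] a b mA m by auto
    moreover have "comp C (comp C m u) \<beta> = comp C k \<beta>" using assoc[of \<beta> u m] a b mA m by auto
    moreover have "k \<in> hom C (ccod C f') (ccod C (comp C x g))" using k dk cxk xg unfolding hom_def by auto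
    ultimately have mu: "comp C m u = k"
      using U1[OF xg(1) kb(1) xg(2) kb(2)] xg kb cxk e2 muA e unfolding hom_def by auto
    show ?thesis
    proof (rule ex1I[of _ m])
      show "m \<in> hom C (ccod C f'') (ccod C x) \<and> comp C m f'' = x \<and> comp C m u = k"
        using m mu by auto
    next
      fix m' assume H: "m' \<in> hom C (ccod C f'') (ccod C x) \<and> comp C m' f'' = x \<and> comp C m' u = k"
      have m'A: "m' \<in> Arr C" "cdom C m' = ccod C u" "ccod C m' = ccod C x" using H b unfolding hom_def by auto
      have "comp C m' (comp C u \<beta>) = comp C k \<beta>" using assoc[of \<beta> u m'] a b m'A H by auto
      then show "m' = m" using muni H by blast
    qed
  qed
  show ?thesis unfolding is_pushout_def
    using a b univ by auto
qed

lemma po_basic: "is_pushout C \<alpha> f f' \<beta> \<Longrightarrow> \<alpha> \<in> Arr C \<and> f \<in> Arr C \<and> f' \<in> Arr C \<and> \<beta> \<in> Arr C \<and>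
     cdom C \<alpha> = cdom C f \<and> cdom C f' = ccod C \<alpha> \<and> cdom C \<beta> = ccod C f \<and>
     ccod C f' = ccod C \<beta> \<and> comp C f' \<alpha> = comp C \<beta> f"
  unfolding is_pushout_def by blast

lemma id_pushout: "f \<in> Arr C \<Longrightarrow> is_pushout C (ident C (cdom C f)) f f (ident C (ccod C f))"
proof -
  assume f: "f \<in> Arr C"
  have i1: "ident C (cdom C f) \<in> Arr C" "cdom C (ident C (cdom C f)) = cdom C f" "ccod C (ident C (cdom C f)) = cdom C f"
    using id_hom dc_obj f by auto
  have i2: "ident C (ccod C f) \<in> Arr C" "cdom C (ident C (ccod C f)) = ccod C f" "ccod C (ident C (ccod C f)) = ccod C f"
    using id_hom dc_obj f by auto
  show ?thesis unfolding is_pushout_def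
  proof (intro conjI ballI impI)
    fix x y assume x: "x \<in> Arr C" and y: "y \<in> Arr C" and dx: "cdom C x = ccod C (ident C (cdom C f))"
      and dy: "cdom C y = ccod C f" and cxy: "ccod C x = ccod C y"
      and e: "comp C x (ident C (cdom C f)) = comp C y f"
    have xe: "x = comp C y f" using e x dx i1 by (metis id_r)
    show "\<exists>!u. u \<in> hom C (ccod C f) (ccod C x) \<and> comp C u f = x \<and> comp C u (ident C (ccod C f)) = y"
    proof (rule ex1I[of _ y])
      show "y \<in> hom C (ccod C f) (ccod C x) \<and> comp C y f = x \<and> comp C y (ident C (ccod C f)) = y"
        using y dy cxy xe unfolding hom_def by (metis (mono_tags, lifting) id_r mem_Collect_eq)
    next
      fix u assume "u \<in> hom C (ccod C f) (ccod C x) \<and> comp C u f = x \<and> comp C u (ident C (ccod C f)) = y"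
      then show "u = y" unfolding hom_def by (metis (mono_tags, lifting) id_r mem_Collect_eq)
    qed
  qed (use f i1 i2 in auto)
qed

end

locale po = cat C for C :: "('o, 'a) category" +
  fixes M :: "'a set"
  assumes ss: "stable_system C M" and hp: "has_pushouts_along C M" and ps: "pushout_stable C M"
begin

lemma M_arr: "m \<in> M \<Longrightarrow> m \<in> Arr C"
  using ss unfolding stable_system_def is_mono_def by blast

lemma comp_M: "m \<in> M \<Longrightarrow> n \<in> M \<Longrightarrow> ccod C m = cdom C n \<Longrightarrow> comp C n m \<in> M"
  using ss unfolding stable_system_def by blast

lemma id_M: "a \<in> Obj C \<Longrightarrow> ident C a \<in> M"
proof -
  assume a: "a \<in> Obj C"
  have "is_iso C (ident C a)" unfolding is_iso_def
    using id_hom[OF a] id_r[of "ident C a"] unfolding hom_def by (intro conjI bexI[of _ "ident C a"]) auto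
  then show ?thesis using ss unfolding stable_system_def by blast
qed

lemma po_M: "\<alpha> \<in> M \<Longrightarrow> is_pushout C \<alpha> f f' \<beta> \<Longrightarrow> \<beta> \<in> M"
  using ps unfolding pushout_stable_def by blast

lemma POv_simps[simp]:
  "Obj (POv C M) = Arr C"
  "cdom (POv C M) (a, b, c, d) = a"
  "ccod (POv C M) (a, b, c, d) = d"
  "ident (POv C M) x = (x, ident C (cdom C x), ident C (ccod C x), x)"
  "comp (POv C M) (a', b', c', d') (a, b, c, d) = (a, comp C b' b, comp C c' c, d')"
  by (simp_all add: POv_def)

lemma POv_arr: "(f, \<alpha>, \<beta>, f') \<in> Arr (POv C M) \<longleftrightarrow> f \<in> Arr C \<and> \<alpha> \<in> M \<and> is_pushout C \<alpha> f f' \<beta>"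
proof -
  have "\<alpha> \<in> M \<Longrightarrow> is_pushout C \<alpha> f f' \<beta> \<Longrightarrow> \<beta> \<in> M" using po_M by blast
  then show ?thesis unfolding POv_def by (auto simp: is_pushout_def)
qed

lemma POv_arr_ex: "\<phi> \<in> Arr (POv C M) \<Longrightarrow> \<exists>f \<alpha> \<beta> f'. \<phi> = (f, \<alpha>, \<beta>, f')"
  by (cases \<phi>) auto

lemma cat_POv: "is_category (POv C M)"
  unfolding is_category_def
proof (intro conjI ballI impI)
  fix \<phi> assume "\<phi> \<in> Arr (POv C M)"
  then obtain f \<alpha> \<beta> f' where p: "\<phi> = (f, \<alpha>, \<beta>, f')" "f \<in> Arr C" "\<alpha> \<in> M" "is_pushout C \<alpha> f f' \<beta>"
    using POv_arr POv_arr_ex by metis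
  then show "cdom (POv C M) \<phi> \<in> Obj (POv C M)" "ccod (POv C M) \<phi> \<in> Obj (POv C M)"
    unfolding is_pushout_def by auto
  have "\<alpha> \<in> Arr C" "\<beta> \<in> Arr C" using p unfolding is_pushout_def by auto
  then show "comp (POv C M) \<phi> (ident (POv C M) (cdom (POv C M) \<phi>)) = \<phi>"
     "comp (POv C M) (ident (POv C M) (ccod (POv C M) \<phi>)) \<phi> = \<phi>"
    using p unfolding is_pushout_def by (auto simp del: id_r id_l) (metis id_r id_l)+
next
  fix f assume f: "f \<in> Obj (POv C M)"
  then show "ident (POv C M) f \<in> hom (POv C M) f f"
    unfolding hom_def using POv_arr id_pushout id_M dc_obj by auto
next
  fix \<phi> \<psi> assume "\<phi> \<in> Arr (POv C M)" "\<psi> \<in> Arr (POv C M)" and m: "ccod (POv C M) \<phi> = cdom (POv C M) \<psi>"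
  then obtain f \<alpha> \<beta> f' g \<alpha>' \<beta>' g' where p: "\<phi> = (f, \<alpha>, \<beta>, f')" "f \<in> Arr C" "\<alpha> \<in> M" "is_pushout C \<alpha> f f' \<beta>"
     "\<psi> = (g, \<alpha>', \<beta>', g')" "g \<in> Arr C" "\<alpha>' \<in> M" "is_pushout C \<alpha>' g g' \<beta>'"
    using POv_arr POv_arr_ex by metis
  have gf: "g = f'" using m p by simp
  show "comp (POv C M) \<psi> \<phi> \<in> hom (POv C M) (cdom (POv C M) \<phi>) (ccod (POv C M) \<psi>)"
  proof -
    have P: "is_pushout C (comp C \<alpha>' \<alpha>) f g' (comp C \<beta>' \<beta>)"
      using p gf pushout_compose[of \<alpha> f f' \<beta> \<alpha>' g' \<beta>'] by simp
    have "ccod C \<alpha> = cdom C \<alpha>'" using p gf unfolding is_pushout_def by simp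
    then have "comp C \<alpha>' \<alpha> \<in> M" using comp_M p by simp
    then show ?thesis unfolding hom_def using P p gf by (auto simp: POv_arr)
  qed
next
  fix \<phi> \<psi> \<chi> assume "\<phi> \<in> Arr (POv C M)" "\<psi> \<in> Arr (POv C M)" "\<chi> \<in> Arr (POv C M)"
    and m: "ccod (POv C M) \<phi> = cdom (POv C M) \<psi>" "ccod (POv C M) \<psi> = cdom (POv C M) \<chi>"
  then obtain f \<alpha> \<beta> f' g \<alpha>' \<beta>' g' h \<alpha>'' \<beta>'' h' where p: "\<phi> = (f, \<alpha>, \<beta>, f')" "is_pushout C \<alpha> f f' \<beta>"
     "\<psi> = (g, \<alpha>', \<beta>', g')" "is_pushout C \<alpha>' g g' \<beta>'"
     "\<chi> = (h, \<alpha>'', \<beta>'', h')" "is_pushout C \<alpha>'' h h' \<beta>''"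
    using POv_arr POv_arr_ex by metis
  have e: "g = f'" "h = g'" using m p by auto
  show "comp (POv C M) \<chi> (comp (POv C M) \<psi> \<phi>) = comp (POv C M) (comp (POv C M) \<chi> \<psi>) \<phi>"
    using p e assoc[of \<alpha> \<alpha>' \<alpha>''] assoc[of \<beta> \<beta>' \<beta>''] unfolding is_pushout_def by auto
qed

lemma cat_restr: "is_category (restr C M)"
  unfolding is_category_def restr_def hom_def
  using M_arr dc_obj id_M id_hom comp_M comp_arr assoc by simp

lemma restr_simps[simp]: "Obj (restr C M) = Obj C" "Arr (restr C M) = M" "cdom (restr C M) = cdom C"
  "ccod (restr C M) = ccod C" "ident (restr C M) = ident C" "comp (restr C M) = comp C"
  by (simp_all add: restr_def)

lemma functor_S: "is_functor (POv C M) (restr C M) (S_obj C) S_arr"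
  unfolding is_functor_def
proof (intro conjI ballI impI cat_POv cat_restr)
  fix e assume "e \<in> Obj (POv C M)" then show "S_obj C e \<in> Obj (restr C M)"
    using dc_obj by (simp add: S_obj_def)
next
  fix \<phi> assume "\<phi> \<in> Arr (POv C M)"
  then obtain f \<alpha> \<beta> f' where p: "\<phi> = (f, \<alpha>, \<beta>, f')" "f \<in> Arr C" "\<alpha> \<in> M" "is_pushout C \<alpha> f f' \<beta>"
    using POv_arr POv_arr_ex by metis
  then show "S_arr \<phi> \<in> hom (restr C M) (S_obj C (cdom (POv C M) \<phi>)) (S_obj C (ccod (POv C M) \<phi>))"
    unfolding hom_def S_arr_def S_obj_def is_pushout_def by simp
next
  fix e show "S_arr (ident (POv C M) e) = ident (restr C M) (S_obj C e)"
    by (simp add: S_arr_def S_obj_def)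
next
  fix \<phi> \<psi> assume "\<phi> \<in> Arr (POv C M)" "\<psi> \<in> Arr (POv C M)"
  then obtain f \<alpha> \<beta> f' g \<alpha>' \<beta>' g' where p: "\<phi> = (f, \<alpha>, \<beta>, f')" "\<psi> = (g, \<alpha>', \<beta>', g')"
    using POv_arr_ex by metis
  then show "S_arr (comp (POv C M) \<psi> \<phi>) = comp (restr C M) (S_arr \<psi>) (S_arr \<phi>)"
    by (simp add: S_arr_def)
qed

lemma opcart:
  assumes f: "f \<in> Arr C" and a: "\<alpha> \<in> M" and P1: "is_pushout C \<alpha> f f' \<beta>"
  shows "op_cartesian (POv C M) (restr C M) (S_obj C) S_arr (f, \<alpha>, \<beta>, f')"
  unfolding op_cartesian_def
proof (intro conjI ballI impI)
  show phi: "(f, \<alpha>, \<beta>, f') \<in> Arr (POv C M)" using POv_arr f a P1 by simp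
  have a1: "\<alpha> \<in> Arr C" "f' \<in> Arr C" "\<beta> \<in> Arr C"
     "cdom C \<alpha> = cdom C f" "cdom C f' = ccod C \<alpha>" "cdom C \<beta> = ccod C f"
     "ccod C f' = ccod C \<beta>" "comp C f' \<alpha> = comp C \<beta> f"
    using P1 unfolding is_pushout_def by auto
  have U1: "\<And>x y. x \<in> Arr C \<Longrightarrow> y \<in> Arr C \<Longrightarrow> cdom C x = ccod C \<alpha> \<Longrightarrow> cdom C y = ccod C f \<Longrightarrow>
        ccod C x = ccod C y \<Longrightarrow> comp C x \<alpha> = comp C y f \<Longrightarrow>
        (\<exists>!k. k \<in> hom C (ccod C f') (ccod C x) \<and> comp C k f' = x \<and> comp C k \<beta> = y)"
    using P1 unfolding is_pushout_def by blast
  fix \<psi> g assume psi: "\<psi> \<in> Arr (POv C M)"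
    and g: "g \<in> hom (restr C M) (S_obj C (ccod (POv C M) (f, \<alpha>, \<beta>, f'))) (S_obj C (ccod (POv C M) \<psi>))"
    and d: "cdom (POv C M) \<psi> = cdom (POv C M) (f, \<alpha>, \<beta>, f')"
    and e: "comp (restr C M) g (S_arr (f, \<alpha>, \<beta>, f')) = S_arr \<psi>"
  obtain f0 \<alpha>2 \<beta>2 f'' where p: "\<psi> = (f0, \<alpha>2, \<beta>2, f'')" "f0 \<in> Arr C" "\<alpha>2 \<in> M" "is_pushout C \<alpha>2 f0 f'' \<beta>2"
    using POv_arr POv_arr_ex psi by metis
  have f0: "f0 = f" using d p by simp
  have gM: "g \<in> M" "cdom C g = cdom C f'" "ccod C g = cdom C f''"
    using g p unfolding hom_def by (auto simp: S_obj_def)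
  have gA: "g \<in> Arr C" using gM M_arr by simp
  have a2: "\<alpha>2 = comp C g \<alpha>" using e p by (simp add: S_arr_def)
  have PO: "is_pushout C (comp C g \<alpha>) f f'' \<beta>2" using p f0 a2 by simp
  have b2: "f'' \<in> Arr C" "\<beta>2 \<in> Arr C" "cdom C \<beta>2 = ccod C f"
     "ccod C f'' = ccod C \<beta>2" "comp C f'' (comp C g \<alpha>) = comp C \<beta>2 f"
    using po_basic[OF PO] comp_arr[of \<alpha> g] a1 gA gM by auto
  have fg: "comp C f'' g \<in> Arr C" "cdom C (comp C f'' g) = ccod C \<alpha>" "ccod C (comp C f'' g) = ccod C f''"
    using comp_arr[of g f'', OF gA b2(1) gM(3)] gM(2) a1(5) by auto
  have "comp C f'' (comp C g \<alpha>) = comp C (comp C f'' g) \<alpha>"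
    by (rule assoc) (use b2(1) a1 gA gM(2,3) in auto)
  then have e3: "comp C (comp C f'' g) \<alpha> = comp C \<beta>2 f" using b2(5) by simp
  have ex: "\<exists>!k. k \<in> hom C (ccod C f') (ccod C (comp C f'' g)) \<and> comp C k f' = comp C f'' g \<and> comp C k \<beta> = \<beta>2"
    by (rule U1) (use fg b2 e3 in auto)
  then obtain u where u: "u \<in> hom C (ccod C f') (ccod C (comp C f'' g))" "comp C u f' = comp C f'' g" "comp C u \<beta> = \<beta>2"
    and uuni: "\<And>u'. u' \<in> hom C (ccod C f') (ccod C (comp C f'' g)) \<Longrightarrow> comp C u' f' = comp C f'' g \<Longrightarrow> comp C u' \<beta> = \<beta>2 \<Longrightarrow> u' = u"
    by blast
  have uA: "u \<in> Arr C" "cdom C u = ccod C f'" "ccod C u = ccod C f''" using u fg unfolding hom_def by auto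
  have P2: "is_pushout C g f' f'' u"
    by (rule pushout_cancel[OF P1 _ gA b2(1) uA(1) _ gM(3)[symmetric] uA(2)]) (use PO u(2,3) gM(2) uA(3) in simp_all)
  show "\<exists>!\<chi>. \<chi> \<in> hom (POv C M) (ccod (POv C M) (f, \<alpha>, \<beta>, f')) (ccod (POv C M) \<psi>) \<and>
          comp (POv C M) \<chi> (f, \<alpha>, \<beta>, f') = \<psi> \<and> S_arr \<chi> = g"
  proof (rule ex1I[of _ "(f', g, u, f'')"])
    show "(f', g, u, f'') \<in> hom (POv C M) (ccod (POv C M) (f, \<alpha>, \<beta>, f')) (ccod (POv C M) \<psi>) \<and>
          comp (POv C M) (f', g, u, f'') (f, \<alpha>, \<beta>, f') = \<psi> \<and> S_arr (f', g, u, f'') = g"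
      unfolding hom_def using POv_arr[of f' g u f''] a1 gM P2 p f0 a2 u by (simp add: S_arr_def)
  next
    fix \<chi> assume H: "\<chi> \<in> hom (POv C M) (ccod (POv C M) (f, \<alpha>, \<beta>, f')) (ccod (POv C M) \<psi>) \<and>
          comp (POv C M) \<chi> (f, \<alpha>, \<beta>, f') = \<psi> \<and> S_arr \<chi> = g"
    then obtain x1 x2 x3 x4 where c: "\<chi> = (x1, x2, x3, x4)" using POv_arr_ex unfolding hom_def by blast
    have c1: "x1 = f'" "x4 = f''" "x2 = g" "comp C x3 \<beta> = \<beta>2" "is_pushout C g f' f'' x3"
      using H c p unfolding hom_def by (auto simp: S_arr_def POv_arr)
    have "x3 \<in> hom C (ccod C f') (ccod C (comp C f'' g))" "comp C x3 f' = comp C f'' g"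
      using c1(5) fg unfolding is_pushout_def hom_def by auto
    then have "x3 = u" using uuni c1 by blast
    then show "\<chi> = (f', g, u, f'')" using c c1 by simp
  qed
qed

lemma main: "grothendieck_opfibration (POv C M) (restr C M) (S_obj C) S_arr"
  unfolding grothendieck_opfibration_def
proof (intro conjI functor_S ballI impI)
  fix e g assume e: "e \<in> Obj (POv C M)" and g: "g \<in> Arr (restr C M)" and d: "cdom (restr C M) g = S_obj C e"
  have "g \<in> M" "e \<in> Arr C" "cdom C e = cdom C g" using e g d by (auto simp: S_obj_def)
  then obtain f' \<beta> where P: "is_pushout C g e f' \<beta>" using hp unfolding has_pushouts_along_def by blast
  show "\<exists>\<phi>. \<phi> \<in> Arr (POv C M) \<and> cdom (POv C M) \<phi> = e \<and> S_arr \<phi> = g \<and> op_cartesian (POv C M) (restr C M) (S_obj C) S_arr \<phi>"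
    using opcart[OF \<open>e \<in> Arr C\<close> \<open>g \<in> M\<close> P] POv_arr P \<open>e \<in> Arr C\<close> \<open>g \<in> M\<close>
    by (intro exI[of _ "(e, g, \<beta>, f')"]) (simp add: S_arr_def)
qed

end


theorem mainTheorem5:
  fixes C :: "('o, 'a) category" and M :: "'a set"
  assumes "is_category C"
    and "stable_system C M"
    and "has_pushouts_along C M"
    and "pushout_stable C M"
  shows "grothendieck_opfibration (POv C M) (restr C M) (S_obj C) S_arr \<and>
         (\<forall>f \<alpha> f' \<beta>. f \<in> Arr C \<longrightarrow> \<alpha> \<in> M \<longrightarrow> cdom C \<alpha> = cdom C f \<longrightarrow>
            is_pushout C \<alpha> f f' \<beta> \<longrightarrow>
            op_cartesian (POv C M) (restr C M) (S_obj C) S_arr (f, \<alpha>, \<beta>, f'))"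
proof -
  interpret po C M using assms by (unfold_locales) auto
  show ?thesis using main opcart by blast
qed

end
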